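(* Let $\mathcal{X}$ be a finite set and $\pi$ a probability mass function on $\mathcal{X}$ with full support. Let groups $\mathcal{G}_1,\mathcal{G}_2$ act on $\mathcal{X}$ with orbits $(\mathcal{O}_i)_{i=1}^{k_1}$ and $(\mathcal{C}_j)_{j=1}^{k_2}$, Gibbs orbit kernels $G_1,G_2$, and let $S_1,S_2\subseteq\ell^2(\pi)$ be the subspaces onto which $G_1,G_2$ project. Let $T$ be the $k_2\times k_1$ matrix $T(j,i)=\pi(\mathcal{O}_i\cap\mathcal{C}_j)/\sqrt{\pi(\mathcal{O}_i)\pi(\mathcal{C}_j)}$. Then the cosine $c(S_1,S_2)=\sigma_2(T)$, the largest singular value of $T$ less than $1$. If all singular values of $T$ are $1$, then $c(S_1,S_2)=0$ and $G_1G_2=G_2G_1=G_\infty$.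
   Context: $\ell^2(\pi)$ has inner product $\langle f,g\rangle_\pi=\sum_xf(x)g(x)\pi(x)$; $\pi(A)=\sum_{z\in A}\pi(z)$. The Gibbs kernel of a group action with orbit $\mathcal{O}(x)$ of $x$ is $G(x,y)=\pi(y)/\pi(\mathcal{O}(x))$ for $y\in\mathcal{O}(x)$ and $0$ otherwise; it is the $\ell^2(\pi)$-orthogonal projection onto the functions constant on each orbit. $G_\infty$ denotes the orthogonal projection onto $S_1\cap S_2$. The cosine is $c(S_1,S_2)=\sup\{\langle f,h\rangle_\pi: f\in S_1\cap(S_1\cap S_2)^\perp,\ h\in S_2\cap(S_1\cap S_2)^\perp,\ \|f\|_\pi,\|h\|_\pi\le1\}$, which equals the operator norm $\|G_1G_2-G_\infty\|_{\ell^2(\pi)\to\ell^2(\pi)}$. Singular values of $T$ are listed in non-increasing order $\sigma_1(T)\ge\sigma_2(T)\ge\cdots$. *)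

theory Defs
  imports "HOL-Algebra.Group_Action" "Jordan_Normal_Form.Char_Poly"
begin

text \<open>The finite state space is the finite type 'a; functions 'a \<Rightarrow> real form l2(pi).\<close>

definition pi_set :: "('a \<Rightarrow> real) \<Rightarrow> 'a set \<Rightarrow> real" where
  "pi_set \<pi> A = (\<Sum>z\<in>A. \<pi> z)"

definition inner_pi :: "('a::finite \<Rightarrow> real) \<Rightarrow> ('a \<Rightarrow> real) \<Rightarrow> ('a \<Rightarrow> real) \<Rightarrow> real" where
  "inner_pi \<pi> f g = (\<Sum>x\<in>UNIV. f x * g x * \<pi> x)"

definition norm_pi :: "('a::finite \<Rightarrow> real) \<Rightarrow> ('a \<Rightarrow> real) \<Rightarrow> real" where
  "norm_pi \<pi> f = sqrt (inner_pi \<pi> f f)"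

definition orth_pi :: "('a::finite \<Rightarrow> real) \<Rightarrow> ('a \<Rightarrow> real) set \<Rightarrow> ('a \<Rightarrow> real) set" where
  "orth_pi \<pi> S = {f. \<forall>g\<in>S. inner_pi \<pi> f g = 0}"

definition gibbs_kernel ::
  "('a \<Rightarrow> real) \<Rightarrow> ('g, 'm) monoid_scheme \<Rightarrow> ('g \<Rightarrow> 'a \<Rightarrow> 'a) \<Rightarrow> 'a \<Rightarrow> 'a \<Rightarrow> real" where
  "gibbs_kernel \<pi> G \<phi> x y =
     (if y \<in> orbit G \<phi> x then \<pi> y / pi_set \<pi> (orbit G \<phi> x) else 0)"

definition gibbs_op ::
  "('a::finite \<Rightarrow> real) \<Rightarrow> ('g, 'm) monoid_scheme \<Rightarrow> ('g \<Rightarrow> 'a \<Rightarrow> 'a) \<Rightarrow> ('a \<Rightarrow> real) \<Rightarrow> ('a \<Rightarrow> real)" where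
  "gibbs_op \<pi> G \<phi> f = (\<lambda>x. \<Sum>y\<in>UNIV. gibbs_kernel \<pi> G \<phi> x y * f y)"

definition gibbs_space ::
  "('a::finite \<Rightarrow> real) \<Rightarrow> ('g, 'm) monoid_scheme \<Rightarrow> ('g \<Rightarrow> 'a \<Rightarrow> 'a) \<Rightarrow> ('a \<Rightarrow> real) set" where
  "gibbs_space \<pi> G \<phi> = range (gibbs_op \<pi> G \<phi>)"

definition orth_proj :: "('a::finite \<Rightarrow> real) \<Rightarrow> ('a \<Rightarrow> real) set \<Rightarrow> ('a \<Rightarrow> real) \<Rightarrow> ('a \<Rightarrow> real)" where
  "orth_proj \<pi> S f = (THE g. g \<in> S \<and> f - g \<in> orth_pi \<pi> S)"

definition cosine :: "('a::finite \<Rightarrow> real) \<Rightarrow> ('a \<Rightarrow> real) set \<Rightarrow> ('a \<Rightarrow> real) set \<Rightarrow> real" where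
  "cosine \<pi> S1 S2 = Sup {inner_pi \<pi> f h | f h.
      f \<in> S1 \<inter> orth_pi \<pi> (S1 \<inter> S2) \<and> h \<in> S2 \<inter> orth_pi \<pi> (S1 \<inter> S2) \<and>
      norm_pi \<pi> f \<le> 1 \<and> norm_pi \<pi> h \<le> 1}"

text \<open>Singular values of a (m x n) real matrix T: square roots of the eigenvalues of the smaller
  Gram matrix (T^T T if n \<le> m, else T T^T), i.e. the min(m,n) singular values (as a set).\<close>
definition singular_values :: "real mat \<Rightarrow> real set" where
  "singular_values T =
     (let A = (if dim_col T \<le> dim_row T then transpose_mat T * T else T * transpose_mat T)
      in {sqrt e | e. eigenvalue A e})"

end

theory Submission
  imports Defs "HOL-Analysis.Analysis"
begin

lemma ip_sym: "inner_pi \<pi> f g = inner_pi \<pi> g f"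
  unfolding inner_pi_def by (simp add: mult.commute mult.left_commute)

lemma ip_add_left: "inner_pi \<pi> (\<lambda>x. f x + g x) h = inner_pi \<pi> f h + inner_pi \<pi> g h"
  unfolding inner_pi_def by (simp add: algebra_simps sum.distrib)

lemma ip_diff_left: "inner_pi \<pi> (f - g) h = inner_pi \<pi> f h - inner_pi \<pi> g h"
  unfolding inner_pi_def by (simp add: algebra_simps sum_subtractf)

lemma ip_diff_left': "inner_pi \<pi> (\<lambda>x. f x - g x) h = inner_pi \<pi> f h - inner_pi \<pi> g h"
  unfolding inner_pi_def by (simp add: algebra_simps sum_subtractf)

lemma ip_scale_left: "inner_pi \<pi> (\<lambda>x. c * f x) h = c * inner_pi \<pi> f h"
  unfolding inner_pi_def by (simp add: algebra_simps sum_distrib_left)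

lemma ip_zero_left[simp]: "inner_pi \<pi> (\<lambda>x. 0) h = 0"
  unfolding inner_pi_def by simp


lemma ip_nonneg: assumes pos: "\<And>x. \<pi> x > 0" shows "0 \<le> inner_pi \<pi> f f"
  unfolding inner_pi_def by (intro sum_nonneg) (simp add: less_imp_le pos)

lemma ip_eq0: assumes pos: "\<And>x. \<pi> x > 0" and "inner_pi \<pi> f f = 0" shows "f = (\<lambda>x. 0)"
proof
  fix x
  have fin: "finite (UNIV::'a set)" by simp
  have nn: "\<And>y. y \<in> UNIV \<Longrightarrow> 0 \<le> f y * f y * \<pi> y"
    using pos by (simp add: less_imp_le)
  have "\<forall>y\<in>UNIV. f y * f y * \<pi> y = 0"
    using sum_nonneg_eq_0_iff[OF fin nn, THEN iffD1] assms(2) unfolding inner_pi_def by simp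
  then have "f x * f x * \<pi> x = 0" by blast
  then show "f x = 0" using pos[of x] by simp
qed

lemma ip_CS: assumes pos: "\<And>x. \<pi> x > 0"
  shows "(inner_pi \<pi> f g)^2 \<le> inner_pi \<pi> f f * inner_pi \<pi> g g"
proof -
  have cs: "(\<Sum>x\<in>UNIV. (f x * sqrt (\<pi> x)) * (g x * sqrt (\<pi> x)))^2 \<le>
        (\<Sum>x\<in>UNIV. (f x * sqrt (\<pi> x))^2) * (\<Sum>x\<in>UNIV. (g x * sqrt (\<pi> x))^2)"
    by (rule Cauchy_Schwarz_ineq_sum)
  have e1: "(\<Sum>x\<in>UNIV. (f x * sqrt (\<pi> x)) * (g x * sqrt (\<pi> x))) = inner_pi \<pi> f g"
    unfolding inner_pi_def
  proof (rule sum.cong)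
    fix x show "(f x * sqrt (\<pi> x)) * (g x * sqrt (\<pi> x)) = f x * g x * \<pi> x"
      using pos[of x] by (simp add: algebra_simps less_imp_le)
  qed simp
  have e2: "(\<Sum>x\<in>UNIV. (h x * sqrt (\<pi> x))^2) = inner_pi \<pi> h h" for h
    unfolding inner_pi_def
  proof (rule sum.cong)
    fix x show "(h x * sqrt (\<pi> x))^2 = h x * h x * \<pi> x"
      using pos[of x] by (simp add: power2_eq_square algebra_simps less_imp_le)
  qed simp
  show ?thesis using cs unfolding e1 e2 .
qed

lemma ip_le_norm: assumes pos: "\<And>x. \<pi> x > 0"
  shows "inner_pi \<pi> f g \<le> norm_pi \<pi> f * norm_pi \<pi> g"
proof -
  have a: "inner_pi \<pi> f g \<le> sqrt ((inner_pi \<pi> f g)^2)" by simp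
  have b: "sqrt ((inner_pi \<pi> f g)^2) \<le> sqrt (inner_pi \<pi> f f * inner_pi \<pi> g g)"
    using ip_CS[OF pos] by (rule real_sqrt_le_mono)
  have c: "sqrt (inner_pi \<pi> f f * inner_pi \<pi> g g) = norm_pi \<pi> f * norm_pi \<pi> g"
    unfolding norm_pi_def by (rule real_sqrt_mult)
  show ?thesis using a b c by linarith
qed


definition Pop :: "('a::finite \<Rightarrow> real) \<Rightarrow> ('a \<Rightarrow> 'a set) \<Rightarrow> ('a \<Rightarrow> real) \<Rightarrow> 'a \<Rightarrow> real" where
  "Pop \<pi> Ob f = (\<lambda>x. (\<Sum>y\<in>Ob x. \<pi> y * f y) / pi_set \<pi> (Ob x))"

definition part :: "('a \<Rightarrow> 'a set) \<Rightarrow> bool" where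
  "part Ob \<longleftrightarrow> (\<forall>x. x \<in> Ob x) \<and> (\<forall>x y. y \<in> Ob x \<longrightarrow> Ob y = Ob x)"

lemma part_refl: "part Ob \<Longrightarrow> x \<in> Ob x" unfolding part_def by blast
lemma part_eq: "part Ob \<Longrightarrow> y \<in> Ob x \<Longrightarrow> Ob y = Ob x" unfolding part_def by blast
lemma part_sym: "part Ob \<Longrightarrow> y \<in> Ob x \<longleftrightarrow> x \<in> Ob y" unfolding part_def by metis

lemma ps_pos:
  fixes \<pi> :: "'a::finite \<Rightarrow> real"
  assumes pos: "\<And>x. \<pi> x > 0" and "x \<in> A" shows "pi_set \<pi> A > 0"
  unfolding pi_set_def using assms by (intro sum_pos) auto

lemma Pop_const:
  fixes \<pi> :: "'a::finite \<Rightarrow> real"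
  assumes pos: "\<And>x. \<pi> x > 0" and P: "part Ob" and c: "\<And>y. y \<in> Ob x \<Longrightarrow> f y = f x"
  shows "Pop \<pi> Ob f x = f x"
proof -
  have "(\<Sum>y\<in>Ob x. \<pi> y * f y) = (\<Sum>y\<in>Ob x. \<pi> y) * f x"
    by (simp add: sum_distrib_right c)
  moreover have "pi_set \<pi> (Ob x) > 0" using ps_pos[OF pos part_refl[OF P]] .
  ultimately show ?thesis unfolding Pop_def pi_set_def by simp
qed

lemma Pop_block:
  assumes P: "part Ob" and "y \<in> Ob x" shows "Pop \<pi> Ob f y = Pop \<pi> Ob f x"
  unfolding Pop_def using part_eq[OF P assms(2)] by simp

lemma Pop_idem:
  fixes \<pi> :: "'a::finite \<Rightarrow> real"
  assumes pos: "\<And>x. \<pi> x > 0" and P: "part Ob"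
  shows "Pop \<pi> Ob (Pop \<pi> Ob f) = Pop \<pi> Ob f"
proof
  fix x show "Pop \<pi> Ob (Pop \<pi> Ob f) x = Pop \<pi> Ob f x"
    by (rule Pop_const[OF pos P]) (rule Pop_block[OF P])
qed

lemma Pop_fix_iff:
  fixes \<pi> :: "'a::finite \<Rightarrow> real"
  assumes pos: "\<And>x. \<pi> x > 0" and P: "part Ob"
  shows "Pop \<pi> Ob f = f \<longleftrightarrow> (\<forall>x y. y \<in> Ob x \<longrightarrow> f y = f x)"
proof
  assume "Pop \<pi> Ob f = f"
  then show "\<forall>x y. y \<in> Ob x \<longrightarrow> f y = f x" using Pop_block[OF P] by metis
next
  assume a: "\<forall>x y. y \<in> Ob x \<longrightarrow> f y = f x"
  show "Pop \<pi> Ob f = f"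
  proof
    fix x show "Pop \<pi> Ob f x = f x" by (rule Pop_const[OF pos P]) (use a in blast)
  qed
qed

lemma sum_restrict_UNIV:
  fixes h :: "'a::finite \<Rightarrow> real"
  shows "(\<Sum>y\<in>UNIV. if y \<in> A then h y else 0) = (\<Sum>y\<in>A. h y)"
  by (simp add: sum.If_cases)

lemma Pop_selfadj:
  fixes \<pi> :: "'a::finite \<Rightarrow> real"
  assumes P: "part Ob"
  shows "inner_pi \<pi> (Pop \<pi> Ob f) g = inner_pi \<pi> f (Pop \<pi> Ob g)"
proof -
  define H where "H x y = (if y \<in> Ob x then \<pi> y * f y * g x * \<pi> x / pi_set \<pi> (Ob x) else 0)" for x y
  have l: "inner_pi \<pi> (Pop \<pi> Ob f) g = (\<Sum>x\<in>UNIV. \<Sum>y\<in>UNIV. H x y)"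
    unfolding inner_pi_def Pop_def H_def sum_restrict_UNIV
    by (simp add: sum_divide_distrib sum_distrib_right)
  have r: "inner_pi \<pi> f (Pop \<pi> Ob g) = (\<Sum>y\<in>UNIV. \<Sum>x\<in>UNIV. H x y)"
  proof -
    have "inner_pi \<pi> f (Pop \<pi> Ob g) = (\<Sum>y\<in>UNIV. \<Sum>x\<in>UNIV.
          (if x \<in> Ob y then \<pi> x * g x * f y * \<pi> y / pi_set \<pi> (Ob y) else 0))"
      unfolding inner_pi_def Pop_def sum_restrict_UNIV
      by (simp add: sum_divide_distrib sum_distrib_right sum_distrib_left algebra_simps)
    also have "\<dots> = (\<Sum>y\<in>UNIV. \<Sum>x\<in>UNIV. H x y)"
    proof (intro sum.cong refl)
      fix x y
      show "(if x \<in> Ob y then \<pi> x * g x * f y * \<pi> y / pi_set \<pi> (Ob y) else 0) = H x y"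
        unfolding H_def using part_sym[OF P, of x y] part_eq[OF P, of y x] by auto
    qed
    finally show ?thesis .
  qed
  show ?thesis unfolding l r by (rule sum.swap)
qed

lemma Pop_diff: "Pop \<pi> Ob (f - g) = Pop \<pi> Ob f - Pop \<pi> Ob g"
  unfolding Pop_def by (rule ext) (simp add: algebra_simps sum_subtractf diff_divide_distrib)

lemma Pop_diff': "Pop \<pi> Ob (\<lambda>x. f x - g x) = (\<lambda>x. Pop \<pi> Ob f x - Pop \<pi> Ob g x)"
  unfolding Pop_def by (rule ext) (simp add: algebra_simps sum_subtractf diff_divide_distrib)

lemma Pop_add: "Pop \<pi> Ob (\<lambda>x. f x + g x) = (\<lambda>x. Pop \<pi> Ob f x + Pop \<pi> Ob g x)"
  unfolding Pop_def by (rule ext) (simp add: algebra_simps sum.distrib add_divide_distrib)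

lemma Pop_scale: "Pop \<pi> Ob (\<lambda>x. c * f x) = (\<lambda>x. c * Pop \<pi> Ob f x)"
  unfolding Pop_def by (rule ext) (simp add: algebra_simps sum_distrib_left)

lemma Pop_zero[simp]: "Pop \<pi> Ob (\<lambda>x. 0) = (\<lambda>x. 0)"
  unfolding Pop_def by simp

lemma orbit_part:
  assumes "group_action G UNIV \<phi>" shows "part (orbit G \<phi>)"
proof -
  interpret group_action G UNIV \<phi> by fact
  show ?thesis unfolding part_def
  proof (intro conjI allI impI)
    fix x show "x \<in> orbit G \<phi> x" by (rule orbit_refl) simp
  next
    fix x y assume y: "y \<in> orbit G \<phi> x"
    show "orbit G \<phi> y = orbit G \<phi> x"
    proof
      show "orbit G \<phi> y \<subseteq> orbit G \<phi> x"
        using orbit_trans[of x y] y by blast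
      show "orbit G \<phi> x \<subseteq> orbit G \<phi> y"
        using orbit_trans[of y x] orbit_sym[of x y] y by blast
    qed
  qed
qed

lemma gibbs_op_eq:
  fixes \<pi> :: "'a::finite \<Rightarrow> real"
  shows "gibbs_op \<pi> G \<phi> = Pop \<pi> (orbit G \<phi>)"
proof (rule ext, rule ext)
  fix f x
  have "gibbs_op \<pi> G \<phi> f x = (\<Sum>y\<in>UNIV. if y \<in> orbit G \<phi> x then \<pi> y * f y / pi_set \<pi> (orbit G \<phi> x) else 0)"
    unfolding gibbs_op_def gibbs_kernel_def by (rule sum.cong) auto
  also have "\<dots> = Pop \<pi> (orbit G \<phi>) f x"
    unfolding sum_restrict_UNIV Pop_def by (simp add: sum_divide_distrib)
  finally show "gibbs_op \<pi> G \<phi> f x = Pop \<pi> (orbit G \<phi>) f x" .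
qed


lemma ip_diff_right: "inner_pi \<pi> h (f - g) = inner_pi \<pi> h f - inner_pi \<pi> h g"
  using ip_diff_left[of \<pi> f g h] ip_sym by metis

lemma ip_scale_right: "inner_pi \<pi> h (\<lambda>x. c * f x) = c * inner_pi \<pi> h f"
  using ip_scale_left[of \<pi> c f h] ip_sym by metis

lemma ip_expand:
  "inner_pi \<pi> (\<lambda>x. f x + t * g x) (\<lambda>x. f x + t * g x) =
   inner_pi \<pi> f f + 2 * t * inner_pi \<pi> f g + t^2 * inner_pi \<pi> g g"
proof -
  have e: "(f x + t * g x) * (f x + t * g x) * \<pi> x = f x * f x * \<pi> x + 2 * t * (f x * g x * \<pi> x) + t^2 * (g x * g x * \<pi> x)" for x
    by (simp add: algebra_simps power2_eq_square)
  show ?thesis unfolding inner_pi_def e by (simp add: sum.distrib sum_distrib_left)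
qed

lemma ip_expand2:
  "inner_pi \<pi> (\<lambda>x. f x + t * g x) h = inner_pi \<pi> f h + t * inner_pi \<pi> g h"
proof -
  have e: "(f x + t * g x) * h x * \<pi> x = f x * h x * \<pi> x + t * (g x * h x * \<pi> x)" for x
    by (simp add: algebra_simps)
  show ?thesis unfolding inner_pi_def e by (simp add: sum.distrib sum_distrib_left)
qed

lemma Pop_lin2: "Pop \<pi> Ob (\<lambda>x. f x + t * g x) = (\<lambda>x. Pop \<pi> Ob f x + t * Pop \<pi> Ob g x)"
proof
  fix x
  have e: "\<pi> y * (f y + t * g y) = \<pi> y * f y + t * (\<pi> y * g y)" for y by (simp add: algebra_simps)
  show "Pop \<pi> Ob (\<lambda>x. f x + t * g x) x = Pop \<pi> Ob f x + t * Pop \<pi> Ob g x"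
    unfolding Pop_def e by (simp add: sum.distrib sum_distrib_left add_divide_distrib)
qed

locale twop =
  fixes \<pi> :: "'a::finite \<Rightarrow> real" and O1 O2 :: "'a \<Rightarrow> 'a set"
  assumes pos: "\<And>x. \<pi> x > 0" and p1: "part O1" and p2: "part O2"
begin

abbreviation "P1 \<equiv> Pop \<pi> O1"
abbreviation "P2 \<equiv> Pop \<pi> O2"
abbreviation "ip \<equiv> inner_pi \<pi>"
abbreviation "W \<equiv> {f. P1 f = f} \<inter> {f. P2 f = f}"
abbreviation "U \<equiv> {f. P1 f = f} \<inter> orth_pi \<pi> W"
abbreviation "q f \<equiv> ip (P2 f) (P2 f)"

lemma ipnn: "0 \<le> ip f f" using ip_nonneg[of \<pi> f] pos by blast
lemma ip0: "ip f f = 0 \<Longrightarrow> f = (\<lambda>x. 0)" using ip_eq0[of \<pi> f] pos by blast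
lemma ipCS: "ip f g \<le> norm_pi \<pi> f * norm_pi \<pi> g" using ip_le_norm[of \<pi> f g] pos by blast

lemma idem1: "P1 (P1 f) = P1 f" by (rule Pop_idem[OF pos p1])
lemma idem2: "P2 (P2 f) = P2 f" by (rule Pop_idem[OF pos p2])
lemma sa1: "ip (P1 f) g = ip f (P1 g)" by (rule Pop_selfadj[OF p1])
lemma sa2: "ip (P2 f) g = ip f (P2 g)" by (rule Pop_selfadj[OF p2])

lemma q_eq: "ip f (P2 f) = q f"
  using sa2[of "P2 f" f] idem2 by (metis ip_sym)

lemma q_nonneg: "0 \<le> q f" by (rule ipnn)

lemma expand_diff: "ip (f - P2 f) (f - P2 f) = ip f f - q f"
proof -
  have a: "ip (f - P2 f) (f - P2 f) = ip f (f - P2 f) - ip (P2 f) (f - P2 f)"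
    by (rule ip_diff_left)
  have b: "ip f (f - P2 f) = ip f f - ip f (P2 f)" by (rule ip_diff_right)
  have c: "ip (P2 f) (f - P2 f) = ip (P2 f) f - q f" by (rule ip_diff_right)
  have d: "ip (P2 f) f = q f" using q_eq[of f] ip_sym[of \<pi> "P2 f" f] by simp
  show ?thesis unfolding a b c d q_eq by simp
qed

lemma q_le: "q f \<le> ip f f"
  using expand_diff[of f] ipnn[of "f - P2 f"] by linarith

lemma q_eq_iff: "q f = ip f f \<Longrightarrow> P2 f = f"
proof -
  assume a: "q f = ip f f"
  have "ip (f - P2 f) (f - P2 f) = 0" using expand_diff[of f] a by simp
  then have z: "f - P2 f = (\<lambda>x. 0)" by (rule ip0)
  show "P2 f = f"
  proof
    fix x show "P2 f x = f x" using fun_cong[OF z, of x] by simp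
  qed
qed

lemma Aq: "P1 f = f \<Longrightarrow> ip f (P1 (P2 f)) = q f"
  using sa1[of f "P2 f"] q_eq by simp

lemma A_sym: "P1 f = f \<Longrightarrow> P1 g = g \<Longrightarrow> ip (P1 (P2 f)) g = ip f (P1 (P2 g))"
proof -
  assume a: "P1 f = f" "P1 g = g"
  have "ip (P1 (P2 f)) g = ip (P2 f) (P1 g)" by (rule sa1)
  also have "\<dots> = ip f (P2 g)" using a(2) sa2 by simp
  also have "\<dots> = ip (P1 f) (P2 g)" using a(1) by simp
  also have "\<dots> = ip f (P1 (P2 g))" by (rule sa1)
  finally show ?thesis .
qed

lemma U_A: assumes "f \<in> U" shows "P1 (P2 f) \<in> U"
proof -
  have "ip (P1 (P2 f)) w = 0" if "w \<in> W" for w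
  proof -
    have w: "P1 w = w" "P2 w = w" using that by auto
    have "ip (P1 (P2 f)) w = ip (P2 f) (P1 w)" by (rule sa1)
    also have "\<dots> = ip f (P2 w)" using w sa2 by simp
    finally have "ip (P1 (P2 f)) w = ip f w" using w by simp
    then show ?thesis using assms that unfolding orth_pi_def by auto
  qed
  then show ?thesis using idem1 unfolding orth_pi_def by auto
qed

lemma U_lin: assumes "f \<in> U" "g \<in> U" shows "(\<lambda>x. f x + t * g x) \<in> U"
  using assms unfolding orth_pi_def by (auto simp: Pop_lin2 ip_expand2)

lemma U_scale: assumes "f \<in> U" shows "(\<lambda>x. t * f x) \<in> U"
  using assms unfolding orth_pi_def by (auto simp: Pop_scale ip_scale_left)

lemma q_scale: "q (\<lambda>x. t * f x) = t^2 * q f"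
  by (simp add: Pop_scale ip_scale_left ip_scale_right power2_eq_square)

end

lemma abs_bound_aux:
  fixes a p :: real assumes "0 < p" "a * a * p \<le> 1" shows "\<bar>a\<bar> \<le> max 1 (1 / p)"
proof (cases "\<bar>a\<bar> \<le> 1")
  case True then show ?thesis by simp
next
  case False
  have "a * a \<le> 1 / p" using assms by (simp add: field_simps)
  moreover have "\<bar>a\<bar> * 1 \<le> \<bar>a\<bar> * \<bar>a\<bar>" using False by (intro mult_left_mono) auto
  moreover have "\<bar>a\<bar> * \<bar>a\<bar> = a * a" by (rule abs_mult_self_eq)
  ultimately show ?thesis by simp
qed

context twop begin

lemma cont_Pop_vec:
  assumes p: "part Ob"
  shows "continuous_on S (\<lambda>v::real^'a. Pop \<pi> Ob (vec_nth v) x)"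
proof -
  have "pi_set \<pi> (Ob x) \<noteq> 0" using ps_pos[of \<pi> x "Ob x"] pos part_refl[OF p] by force
  then show ?thesis unfolding Pop_def by (intro continuous_intros) auto
qed

lemma cont_q: "continuous_on S (\<lambda>v::real^'a. q (vec_nth v))"
  unfolding inner_pi_def by (intro continuous_intros cont_Pop_vec p2)

lemma cont_ip: "continuous_on S (\<lambda>v::real^'a. ip (vec_nth v) w)"
  unfolding inner_pi_def by (intro continuous_intros)

lemma cont_ip2: "continuous_on S (\<lambda>v::real^'a. ip (vec_nth v) (vec_nth v))"
  unfolding inner_pi_def by (intro continuous_intros)

lemma q_zero: "q (\<lambda>x. 0) = 0" by simp

lemma c1: "closed {v::real^'a. \<forall>x. P1 (vec_nth v) x = vec_nth v x}"
proof (rule closed_Collect_all)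
  fix x
  show "closed {v::real^'a. P1 (vec_nth v) x = vec_nth v x}"
    by (rule closed_Collect_eq[OF cont_Pop_vec[OF p1] continuous_on_component[OF continuous_on_id]])
qed

lemma c3: "closed {v::real^'a. ip (vec_nth v) (vec_nth v) = 1}"
  by (rule closed_Collect_eq[OF cont_ip2 continuous_on_const])

lemma c2: "closed (\<Inter>w\<in>Z. {v::real^'a. ip (vec_nth v) w = 0})"
  apply (rule closed_INT)
  apply (intro ballI)
  apply (rule closed_Collect_eq[OF cont_ip continuous_on_const])
  done

lemma V_scale: assumes "f \<in> {f. P1 f = f} \<inter> orth_pi \<pi> Z" shows "(\<lambda>x. t * f x) \<in> {f. P1 f = f} \<inter> orth_pi \<pi> Z"
  using assms unfolding orth_pi_def by (auto simp: Pop_scale ip_scale_left)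

lemma exists_max_gen:
  fixes F :: "('a \<Rightarrow> real) \<Rightarrow> real"
  assumes cF: "continuous_on UNIV (\<lambda>v::real^'a. F (vec_nth v))"
  assumes f1: "f1 \<in> {f. P1 f = f} \<inter> orth_pi \<pi> Z" "f1 \<noteq> (\<lambda>x. 0)"
  shows "\<exists>f0\<in>{f. P1 f = f} \<inter> orth_pi \<pi> Z. ip f0 f0 = 1 \<and>
     (\<forall>f\<in>{f. P1 f = f} \<inter> orth_pi \<pi> Z. ip f f = 1 \<longrightarrow> F f \<le> F f0)"
proof -
  define K where "K = {v::real^'a. vec_nth v \<in> {f. P1 f = f} \<inter> orth_pi \<pi> Z \<and> ip (vec_nth v) (vec_nth v) = 1}"
  have Keq: "K = {v. \<forall>x. P1 (vec_nth v) x = vec_nth v x} \<inter> (\<Inter>w\<in>Z. {v. ip (vec_nth v) w = 0})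
      \<inter> {v. ip (vec_nth v) (vec_nth v) = 1}"
    unfolding K_def orth_pi_def by (auto simp: fun_eq_iff)
  have closedK: "closed K" unfolding Keq using c1 c2 c3 by (intro closed_Int)
  have bK: "norm v \<le> (\<Sum>i\<in>UNIV. max 1 (1 / \<pi> i))" if "v \<in> K" for v
  proof -
    have one: "(\<Sum>x\<in>UNIV. v $ x * v $ x * \<pi> x) = 1" using that unfolding K_def inner_pi_def by simp
    have "\<bar>v $ i\<bar> \<le> max 1 (1 / \<pi> i)" for i
    proof (rule abs_bound_aux[OF pos])
      have "v $ i * v $ i * \<pi> i \<le> (\<Sum>x\<in>UNIV. v $ x * v $ x * \<pi> x)"
        by (rule member_le_sum) (auto simp: less_imp_le pos)
      then show "v $ i * v $ i * \<pi> i \<le> 1" using one by simp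
    qed
    then have "(\<Sum>i\<in>UNIV. \<bar>v $ i\<bar>) \<le> (\<Sum>i\<in>UNIV. max 1 (1 / \<pi> i))" by (intro sum_mono)
    then show ?thesis using norm_le_l1_cart[of v] by linarith
  qed
  have boundedK: "bounded K" unfolding bounded_iff using bK by blast
  have compK: "compact K" using closedK boundedK by (simp add: compact_eq_bounded_closed)
  define c where "c = ip f1 f1"
  have cpos: "c > 0" using ipnn[of f1] ip0[of f1] f1(2) unfolding c_def by force
  define g where "g = (\<lambda>x. (1 / sqrt c) * f1 x)"
  have gU: "g \<in> {f. P1 f = f} \<inter> orth_pi \<pi> Z" unfolding g_def by (rule V_scale[OF f1(1)])
  have gn: "ip g g = 1" unfolding g_def ip_scale_left ip_scale_right using cpos
    by (simp add: c_def[symmetric] power2_eq_square[symmetric])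
  have "vec_lambda g \<in> K" unfolding K_def using gU gn by (simp add: vec_lambda_inverse)
  then have Kne: "K \<noteq> {}" by blast
  obtain v0 where v0: "v0 \<in> K" "\<And>v. v \<in> K \<Longrightarrow> F (vec_nth v) \<le> F (vec_nth v0)"
    using continuous_attains_sup[OF compK Kne continuous_on_subset[OF cF]] by blast
  show ?thesis
  proof (intro bexI conjI ballI impI)
    show "vec_nth v0 \<in> {f. P1 f = f} \<inter> orth_pi \<pi> Z" "ip (vec_nth v0) (vec_nth v0) = 1" using v0(1) unfolding K_def by auto
    fix f assume "f \<in> {f. P1 f = f} \<inter> orth_pi \<pi> Z" "ip f f = 1"
    then have "vec_lambda f \<in> K" unfolding K_def by (simp add: vec_lambda_inverse)
    from v0(2)[OF this] show "F f \<le> F (vec_nth v0)" by (simp add: vec_lambda_inverse)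
  qed
qed

end

lemma quad_aux:
  fixes a b :: real
  assumes all: "\<And>t. 0 \<le> 2 * t * a + t^2 * b" and b: "0 \<le> b" and a: "0 \<le> a"
  shows "a = 0"
proof (rule ccontr)
  assume "a \<noteq> 0"
  then have ap: "a > 0" using a by simp
  define s where "s = a / (b + 1)"
  have sp: "s > 0" unfolding s_def using ap b by simp
  have "0 \<le> 2 * (-s) * a + (-s)^2 * b" by (rule all)
  then have "0 \<le> s * (s * b - 2 * a)" by (simp add: algebra_simps power2_eq_square)
  then have h1: "2 * a \<le> s * b" using sp by (simp add: zero_le_mult_iff)
  have h2: "s * b \<le> a" unfolding s_def using ap b by (simp add: field_simps)
  show False using h1 h2 ap by linarith
qed

lemma quad_aux2:
  fixes a b :: real
  assumes all: "\<And>t. 0 \<le> 2 * t * a + t^2 * b" and b: "0 \<le> b"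
  shows "a = 0"
proof (cases "0 \<le> a")
  case True then show ?thesis using quad_aux[OF all b] by blast
next
  case False
  have "0 \<le> 2 * t * (-a) + t^2 * b" for t using all[of "-t"] by simp
  then have "-a = 0" using quad_aux[of "-a" b] b False by simp
  then show ?thesis by simp
qed

context twop begin

lemma q_zero_fun: "q (\<lambda>x. 0) = 0" by simp

lemma norm_scale_one:
  assumes "0 < ip f f"
  shows "ip (\<lambda>x. (1 / sqrt (ip f f)) * f x) (\<lambda>x. (1 / sqrt (ip f f)) * f x) = 1"
  unfolding ip_scale_left ip_scale_right using assms
  by (simp add: power2_eq_square[symmetric])

lemma ip_pos: "f \<noteq> (\<lambda>x. 0) \<Longrightarrow> 0 < ip f f"
  using ipnn[of f] ip0[of f] by force

lemma bound_from_max: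
  assumes f0: "ip f0 f0 = 1"
    and mx: "\<forall>f\<in>{f. P1 f = f} \<inter> orth_pi \<pi> Z. ip f f = 1 \<longrightarrow> s * q f \<le> s * q f0"
    and fV: "f \<in> {f. P1 f = f} \<inter> orth_pi \<pi> Z"
  shows "s * q f \<le> s * q f0 * ip f f"
proof (cases "f = (\<lambda>x. 0)")
  case True then show ?thesis by simp
next
  case False
  define c where "c = ip f f"
  have cp: "0 < c" using ip_pos[OF False] unfolding c_def .
  define g where "g = (\<lambda>x. (1 / sqrt c) * f x)"
  have gV: "g \<in> {f. P1 f = f} \<inter> orth_pi \<pi> Z" unfolding g_def by (rule V_scale[OF fV])
  have gn: "ip g g = 1" unfolding g_def c_def by (rule norm_scale_one) (use cp c_def in simp)
  have "s * q g \<le> s * q f0" using mx gV gn by blast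
  moreover have "q g = q f / c" unfolding g_def q_scale using cp
    by (simp add: power2_eq_square[symmetric] divide_inverse real_sqrt_inverse[symmetric])
  ultimately have "s * (q f / c) \<le> s * q f0" by simp
  then have "s * q f / c \<le> s * q f0" by simp
  then show ?thesis using cp unfolding c_def[symmetric] by (simp add: divide_le_eq mult.commute mult.left_commute)
qed

lemma eigen_gen:
  assumes s: "s = 1 \<or> s = -1"
    and ZW: "\<And>f. f \<in> {f. P1 f = f} \<inter> orth_pi \<pi> Z \<Longrightarrow> P1 (P2 f) \<in> orth_pi \<pi> Z"
    and f0V: "f0 \<in> {f. P1 f = f} \<inter> orth_pi \<pi> Z" and f0: "ip f0 f0 = 1"
    and mx: "\<forall>f\<in>{f. P1 f = f} \<inter> orth_pi \<pi> Z. ip f f = 1 \<longrightarrow> s * q f \<le> s * q f0"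
  shows "P1 (P2 f0) = (\<lambda>x. q f0 * f0 x)"
proof -
  define V where "V = {f. P1 f = f} \<inter> orth_pi \<pi> Z"
  define lam where "lam = q f0"
  define A0 where "A0 = P1 (P2 f0)"
  define r where "r = (\<lambda>x. lam * f0 x - A0 x)"
  have linV: "(\<lambda>x. f x + t * g x) \<in> V" if "f \<in> V" "g \<in> V" for f g t
    using that unfolding V_def orth_pi_def by (auto simp: Pop_lin2 ip_expand2)
  have A0V: "A0 \<in> V" unfolding A0_def V_def using ZW[OF f0V] idem1 by simp
  have f0V': "f0 \<in> V" using f0V unfolding V_def .
  have "(\<lambda>x. (\<lambda>x. lam * f0 x) x + (-1) * A0 x) \<in> V"
    using linV[OF V_scale[OF f0V, of lam, folded V_def] A0V] .
  then have rV: "r \<in> V" unfolding r_def by simp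
  have Pr: "P1 r = r" using rV unfolding V_def by simp
  have phi: "0 \<le> s * (lam * ip h h - q h)" if "h \<in> V" for h
    using bound_from_max[OF f0 mx, of h] that unfolding V_def lam_def by (simp add: algebra_simps)
  have key: "ip (P2 f0) (P2 r) = ip A0 r"
  proof -
    have "ip (P2 f0) (P2 r) = ip (P2 (P2 f0)) r" using sa2[of "P2 f0" r] by simp
    also have "\<dots> = ip (P2 f0) (P1 r)" using idem2 Pr by simp
    also have "\<dots> = ip A0 r" unfolding A0_def using sa1[of "P2 f0" r] by simp
    finally show ?thesis .
  qed
  have rr: "ip r r = lam * ip f0 r - ip A0 r"
    unfolding r_def ip_diff_left' ip_scale_left ..
  have quad: "0 \<le> 2 * t * (s * ip r r) + t^2 * (s * (lam * ip r r - q r))" for t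
  proof -
    define h where "h = (\<lambda>x. f0 x + t * r x)"
    have hV: "h \<in> V" unfolding h_def by (rule linV[OF f0V' rV])
    have e1: "ip h h = 1 + 2 * t * ip f0 r + t^2 * ip r r" unfolding h_def ip_expand f0 ..
    have e2: "q h = q f0 + 2 * t * ip (P2 f0) (P2 r) + t^2 * q r"
      unfolding h_def Pop_lin2 ip_expand ..
    have "0 \<le> s * (lam * ip h h - q h)" by (rule phi[OF hV])
    also have "s * (lam * ip h h - q h) = 2 * t * (s * ip r r) + t^2 * (s * (lam * ip r r - q r))"
      unfolding e1 e2 key rr lam_def by (simp add: algebra_simps)
    finally show ?thesis .
  qed
  have "s * ip r r = 0"
    by (rule quad_aux2[OF quad]) (rule phi[OF rV])
  then have "ip r r = 0" using s by auto
  then have "r = (\<lambda>x. 0)" by (rule ip0)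
  then have "A0 x = lam * f0 x" for x using fun_cong[of r "\<lambda>x. 0" x] unfolding r_def by simp
  then show ?thesis unfolding A0_def lam_def by (intro ext) simp
qed

end

context twop begin

abbreviation "E0 \<equiv> {e. \<exists>f. P1 f = f \<and> f \<noteq> (\<lambda>x. 0) \<and> P1 (P2 f) = (\<lambda>x. e * f x)}"

lemma eig_props:
  assumes "P1 f = f" "f \<noteq> (\<lambda>x. 0)" "P1 (P2 f) = (\<lambda>x. e * f x)"
  shows "e * ip f f = q f" "0 \<le> e" "e \<le> 1"
proof -
  have "ip f (P1 (P2 f)) = q f" by (rule Aq[OF assms(1)])
  then show eq: "e * ip f f = q f" using assms(3) ip_scale_right[of \<pi> f e f] by simp
  have p: "0 < ip f f" by (rule ip_pos[OF assms(2)])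
  have "0 \<le> e * ip f f" using eq q_nonneg[of f] by simp
  then show "0 \<le> e" using p by (auto simp: zero_le_mult_iff)
  have "e * ip f f \<le> 1 * ip f f" using eq q_le[of f] by simp
  then show "e \<le> 1" using p by (simp only: mult_le_cancel_right)
qed

lemma eig_in_U:
  assumes "P1 f = f" "P1 (P2 f) = (\<lambda>x. e * f x)" "e < 1"
  shows "f \<in> U"
proof -
  have "ip f w = 0" if w: "w \<in> W" for w
  proof -
    have wP: "P1 w = w" "P2 w = w" using w by auto
    have "ip (P1 (P2 f)) w = ip f (P1 (P2 w))" by (rule A_sym[OF assms(1) wP(1)])
    then have "e * ip f w = ip f w" using assms(2) wP ip_scale_left[of \<pi> e f w] by simp
    then show ?thesis using assms(3) by (metis mult_cancel_right1 less_irrefl)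
  qed
  then show ?thesis using assms(1) unfolding orth_pi_def by auto
qed

lemma U_case:
  assumes f1: "f1 \<in> U" "f1 \<noteq> (\<lambda>x. 0)"
  shows "\<exists>f0. f0 \<in> U \<and> ip f0 f0 = 1 \<and> P1 (P2 f0) = (\<lambda>x. q f0 * f0 x) \<and> q f0 < 1 \<and>
              (\<forall>f\<in>U. q f \<le> q f0 * ip f f)"
proof -
  obtain f0 where f0: "f0 \<in> U" "ip f0 f0 = 1" and mx0: "\<forall>f\<in>U. ip f f = 1 \<longrightarrow> q f \<le> q f0"
    using exists_max_gen[OF cont_q f1] by blast
  have mx: "\<forall>f\<in>U. ip f f = 1 \<longrightarrow> 1 * q f \<le> 1 * q f0" using mx0 by simp
  have eig: "P1 (P2 f0) = (\<lambda>x. q f0 * f0 x)"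
    by (rule eigen_gen[OF _ _ f0 mx]) (use U_A in blast)+
  have bd: "\<forall>f\<in>U. q f \<le> q f0 * ip f f" using bound_from_max[OF f0(2) mx] by simp
  have lt: "q f0 < 1"
  proof (rule ccontr)
    assume "\<not> q f0 < 1"
    then have "q f0 = ip f0 f0" using q_le[of f0] f0(2) by simp
    then have "P2 f0 = f0" by (rule q_eq_iff)
    then have "f0 \<in> W" using f0(1) by simp
    then have "ip f0 f0 = 0" using f0(1) unfolding orth_pi_def by blast
    then show False using f0(2) by simp
  qed
  show ?thesis using f0 eig lt bd by blast
qed

lemma min_case:
  "\<exists>g. P1 g = g \<and> g \<noteq> (\<lambda>x. 0) \<and> P1 (P2 g) = (\<lambda>x. q g * g x) \<and> (\<forall>f. P1 f = f \<longrightarrow> q g * ip f f \<le> q f)"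
proof -
  have c1: "P1 (\<lambda>x. 1) = (\<lambda>x. 1)" by (rule ext, rule Pop_const[OF pos p1]) simp
  have o: "orth_pi \<pi> {} = UNIV" unfolding orth_pi_def by simp
  have f1: "(\<lambda>x. 1) \<in> {f. P1 f = f} \<inter> orth_pi \<pi> {}" "(\<lambda>x::'a. 1::real) \<noteq> (\<lambda>x. 0)"
    using c1 o by (auto simp: fun_eq_iff)
  have cF: "continuous_on UNIV (\<lambda>v::real^'a. - q (vec_nth v))"
    by (intro continuous_on_minus cont_q)
  obtain g where g: "g \<in> {f. P1 f = f} \<inter> orth_pi \<pi> {}" "ip g g = 1"
    and mx0: "\<forall>f\<in>{f. P1 f = f} \<inter> orth_pi \<pi> {}. ip f f = 1 \<longrightarrow> - q f \<le> - q g"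
    using exists_max_gen[OF cF f1] by blast
  have mx: "\<forall>f\<in>{f. P1 f = f} \<inter> orth_pi \<pi> {}. ip f f = 1 \<longrightarrow> (-1) * q f \<le> (-1) * q g"
    using mx0 by simp
  have eig: "P1 (P2 g) = (\<lambda>x. q g * g x)"
    by (rule eigen_gen[OF _ _ g mx]) (auto simp: o)
  have bd: "q g * ip f f \<le> q f" if "P1 f = f" for f
    using bound_from_max[OF g(2) mx, of f] that o by simp
  have "g \<noteq> (\<lambda>x. 0)" using g(2) by auto
  then show ?thesis using g eig bd by blast
qed

abbreviation "Cset \<equiv> {ip f h | f h. f \<in> {f. P1 f = f} \<inter> orth_pi \<pi> W \<and> h \<in> {f. P2 f = f} \<inter> orth_pi \<pi> W \<and>
      norm_pi \<pi> f \<le> 1 \<and> norm_pi \<pi> h \<le> 1}"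

lemma C_le:
  assumes L: "\<forall>f\<in>U. q f \<le> L * ip f f" "0 \<le> L" and x: "x \<in> Cset"
  shows "x \<le> sqrt L"
proof -
  obtain f h where fh: "x = ip f h" "f \<in> U" "h \<in> {f. P2 f = f} \<inter> orth_pi \<pi> W"
      "norm_pi \<pi> f \<le> 1" "norm_pi \<pi> h \<le> 1" using x by blast
  have "ip f h = ip f (P2 h)" using fh(3) by simp
  also have "\<dots> = ip (P2 f) h" using sa2[of f h] by simp
  also have "\<dots> \<le> norm_pi \<pi> (P2 f) * norm_pi \<pi> h" by (rule ipCS)
  also have "\<dots> \<le> norm_pi \<pi> (P2 f)"
    using fh(5) q_nonneg[of f] by (intro mult_left_le) (auto simp: norm_pi_def)
  also have "\<dots> = sqrt (q f)" unfolding norm_pi_def ..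
  also have "\<dots> \<le> sqrt (L * ip f f)" using L(1) fh(2) by simp
  also have "\<dots> \<le> sqrt L"
  proof -
    have "ip f f \<le> 1" using fh(4) ipnn[of f] unfolding norm_pi_def by simp
    then have "L * ip f f \<le> L" using L(2) ipnn[of f] by (simp add: mult_left_le)
    then show ?thesis by simp
  qed
  finally show ?thesis using fh(1) by simp
qed

lemma zero_in_C: "0 \<in> Cset"
proof -
  have z: "(\<lambda>x::'a. 0::real) \<in> {f. P1 f = f} \<inter> orth_pi \<pi> W" "(\<lambda>x::'a. 0::real) \<in> {f. P2 f = f} \<inter> orth_pi \<pi> W"
    unfolding orth_pi_def by auto
  have n: "norm_pi \<pi> (\<lambda>x. 0) = 0" unfolding norm_pi_def by simp
  have "ip (\<lambda>x. 0) (\<lambda>x. 0) = 0" by simp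
  then show ?thesis using z n by (smt (verit) mem_Collect_eq)
qed

lemma cos_eq:
  assumes L: "\<forall>f\<in>U. q f \<le> L * ip f f" "0 \<le> L" and att: "sqrt L \<in> Cset"
  shows "cosine \<pi> {f. P1 f = f} {f. P2 f = f} = sqrt L"
  unfolding cosine_def
  by (rule cSup_eq_maximum[OF att]) (rule C_le[OF L])

end

context twop begin

lemma SV_mem:
  assumes E: "E = E0" and s: "\<sigma> \<in> {\<sigma> \<in> {sqrt e |e. e \<in> E}. \<sigma> < 1}"
  obtains e f where "P1 f = f" "f \<noteq> (\<lambda>x. 0)" "P1 (P2 f) = (\<lambda>x. e * f x)" "\<sigma> = sqrt e" "e < 1"
proof -
  from s E obtain e f where "P1 f = f" "f \<noteq> (\<lambda>x. 0)" "P1 (P2 f) = (\<lambda>x. e * f x)" "\<sigma> = sqrt e" "sqrt e < 1"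
    by blast
  then show ?thesis using that by simp
qed

lemma loc_part2:
  assumes E: "E = E0" and emp: "{\<sigma> \<in> {sqrt e |e. e \<in> E}. \<sigma> < 1} = {}"
  shows "\<forall>f. P1 f = f \<longrightarrow> P2 f = f"
proof -
  obtain g where g: "P1 g = g" "g \<noteq> (\<lambda>x. 0)" "P1 (P2 g) = (\<lambda>x. q g * g x)"
    and bd: "\<forall>f. P1 f = f \<longrightarrow> q g * ip f f \<le> q f" using min_case by blast
  have "q g \<in> E" using g E by blast
  have ge: "1 \<le> q g"
  proof (rule ccontr)
    assume "\<not> 1 \<le> q g"
    then have "sqrt (q g) < 1" by simp
    then have "sqrt (q g) \<in> {\<sigma> \<in> {sqrt e |e. e \<in> E}. \<sigma> < 1}" using \<open>q g \<in> E\<close> by blast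
    then show False using emp by blast
  qed
  show ?thesis
  proof (intro allI impI)
    fix f assume f: "P1 f = f"
    have "ip f f \<le> q g * ip f f" using ge ipnn[of f] by (simp add: mult_le_cancel_right1)
    also have "\<dots> \<le> q f" using bd f by blast
    finally have "q f = ip f f" using q_le[of f] by simp
    then show "P2 f = f" by (rule q_eq_iff)
  qed
qed

lemma loc_part1:
  assumes E: "E = E0" and fin: "finite E"
  shows "cosine \<pi> {f. P1 f = f} {f. P2 f = f} =
    (if {\<sigma> \<in> {sqrt e |e. e \<in> E}. \<sigma> < 1} = {} then 0 else Max {\<sigma> \<in> {sqrt e |e. e \<in> E}. \<sigma> < 1})"
proof (cases "\<exists>f1\<in>U. f1 \<noteq> (\<lambda>x. 0)")
  case True
  then obtain f1 where f1: "f1 \<in> U" "f1 \<noteq> (\<lambda>x. 0)" by blast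
  obtain f0 where f0: "f0 \<in> U" "ip f0 f0 = 1" "P1 (P2 f0) = (\<lambda>x. q f0 * f0 x)" "q f0 < 1"
    and bd: "\<forall>f\<in>U. q f \<le> q f0 * ip f f"
    using U_case[OF f1] by blast
  define lam where "lam = q f0"
  have lam0: "0 \<le> lam" unfolding lam_def by (rule q_nonneg)
  have f0nz: "f0 \<noteq> (\<lambda>x. 0)" using f0(2) by auto
  have lamE: "lam \<in> E" using f0 f0nz E unfolding lam_def by blast
  define SV where "SV = {\<sigma> \<in> {sqrt e |e. e \<in> E}. \<sigma> < 1}"
  have inSV: "sqrt lam \<in> SV" unfolding SV_def using lamE f0(4) lam_def by auto
  have finSV: "finite SV"
  proof -
    have "SV \<subseteq> sqrt ` E" unfolding SV_def by blast
    then show ?thesis by (rule finite_subset) (rule finite_imageI[OF fin])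
  qed
  have leSV: "\<sigma> \<le> sqrt lam" if "\<sigma> \<in> SV" for \<sigma>
  proof -
    from that have "\<sigma> \<in> {\<sigma> \<in> {sqrt e |e. e \<in> E}. \<sigma> < 1}" unfolding SV_def .
    then obtain e f where ef: "P1 f = f" "f \<noteq> (\<lambda>x. 0)" "P1 (P2 f) = (\<lambda>x. e * f x)" "\<sigma> = sqrt e" "e < 1"
      by (rule SV_mem[OF E])
    have fU: "f \<in> U" by (rule eig_in_U[OF ef(1) ef(3) ef(5)])
    have "e * ip f f = q f" by (rule eig_props(1)[OF ef(1-3)])
    also have "\<dots> \<le> lam * ip f f" using bd fU unfolding lam_def by blast
    finally have "e \<le> lam" using ip_pos[OF ef(2)] by (simp only: mult_le_cancel_right)
    then show ?thesis using ef(4) by simp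
  qed
  have MaxSV: "Max SV = sqrt lam" by (rule Max_eqI[OF finSV leSV inSV])
  have att: "sqrt lam \<in> Cset"
  proof (cases "lam = 0")
    case True then show ?thesis using zero_in_C by simp
  next
    case False
    then have lp: "0 < lam" using lam0 by simp
    define h where "h = (\<lambda>x. (1 / sqrt lam) * P2 f0 x)"
    have hS: "P2 h = h" unfolding h_def Pop_scale idem2 ..
    have hW: "h \<in> orth_pi \<pi> W"
    proof -
      have "ip h w = 0" if w: "w \<in> W" for w
      proof -
        have "ip h w = (1 / sqrt lam) * ip (P2 f0) w" unfolding h_def by (rule ip_scale_left)
        also have "ip (P2 f0) w = ip f0 (P2 w)" by (rule sa2)
        also have "\<dots> = ip f0 w" using w by simp
        also have "\<dots> = 0" using f0(1) w unfolding orth_pi_def by blast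
        finally show ?thesis by simp
      qed
      then show ?thesis unfolding orth_pi_def by blast
    qed
    have nf0: "norm_pi \<pi> f0 \<le> 1" unfolding norm_pi_def using f0(2) by simp
    have "ip h h = (1 / sqrt lam) * ((1 / sqrt lam) * q f0)"
      unfolding h_def ip_scale_left ip_scale_right ..
    also have "\<dots> = 1" using lp unfolding lam_def[symmetric]
      by (simp add: field_simps)
    finally have nh: "norm_pi \<pi> h \<le> 1" unfolding norm_pi_def by simp
    have "ip f0 h = (1 / sqrt lam) * ip f0 (P2 f0)" unfolding h_def by (rule ip_scale_right)
    also have "\<dots> = sqrt lam"
    proof -
      have s: "sqrt lam * sqrt lam = lam" using lam0 by simp
      have sp: "sqrt lam > 0" using lp by simp
      have "(1 / sqrt lam) * lam = sqrt lam" using real_div_sqrt[OF lam0] by simp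
      then show ?thesis unfolding q_eq lam_def[symmetric] .
    qed
    finally have val: "ip f0 h = sqrt lam" .
    have hS': "h \<in> {f. P2 f = f} \<inter> orth_pi \<pi> W" using hS hW by simp
    show ?thesis using f0(1) hS' nf0 nh val[symmetric] by blast
  qed
  have "cosine \<pi> {f. P1 f = f} {f. P2 f = f} = sqrt lam"
    by (rule cos_eq[OF _ lam0 att]) (use bd lam_def in simp)
  then show ?thesis using inSV MaxSV unfolding SV_def by auto
next
  case False
  then have U0: "\<And>f. f \<in> U \<Longrightarrow> f = (\<lambda>x. 0)" by blast
  have emp: "{\<sigma> \<in> {sqrt e |e. e \<in> E}. \<sigma> < 1} = {}"
  proof (rule ccontr)
    assume "{\<sigma> \<in> {sqrt e |e. e \<in> E}. \<sigma> < 1} \<noteq> {}"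
    then obtain \<sigma> where "\<sigma> \<in> {\<sigma> \<in> {sqrt e |e. e \<in> E}. \<sigma> < 1}" by blast
    then obtain e f where ef: "P1 f = f" "f \<noteq> (\<lambda>x. 0)" "P1 (P2 f) = (\<lambda>x. e * f x)" "\<sigma> = sqrt e" "e < 1"
      by (rule SV_mem[OF E])
    have "f \<in> U" by (rule eig_in_U[OF ef(1) ef(3) ef(5)])
    then show False using U0 ef(2) by blast
  qed
  have "cosine \<pi> {f. P1 f = f} {f. P2 f = f} = sqrt 0"
  proof (rule cos_eq)
    show "\<forall>f\<in>U. q f \<le> 0 * ip f f"
    proof
      fix f assume "f \<in> U"
      then have "f = (\<lambda>x. 0)" by (rule U0)
      then show "q f \<le> 0 * ip f f" by simp
    qed
    show "sqrt 0 \<in> Cset" using zero_in_C by simp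
  qed simp
  then show ?thesis using emp by simp
qed

end

definition Fv :: "('a::finite \<Rightarrow> real) \<Rightarrow> (nat \<Rightarrow> 'a set) \<Rightarrow> nat \<Rightarrow> real Matrix.vec \<Rightarrow> 'a \<Rightarrow> real" where
  "Fv \<pi> Orb k a = (\<lambda>x. \<Sum>i<k. vec_index a i * (if x \<in> Orb i then 1 / sqrt (pi_set \<pi> (Orb i)) else 0))"

locale penum =
  fixes \<pi> :: "'a::finite \<Rightarrow> real" and Ob :: "'a \<Rightarrow> 'a set" and Orb :: "nat \<Rightarrow> 'a set" and k :: nat
  assumes pos: "\<And>x. \<pi> x > 0" and pt: "part Ob" and bij: "bij_betw Orb {..<k} (range Ob)"
begin

lemma idx: "\<exists>i<k. Orb i = Ob x"
proof -
  have "Ob x \<in> Orb ` {..<k}" using bij unfolding bij_betw_def by auto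
  then show ?thesis by auto
qed

lemma Orb_range: assumes "i < k" shows "\<exists>y. Orb i = Ob y"
proof -
  have "Orb i \<in> Orb ` {..<k}" using assms by simp
  then have "Orb i \<in> range Ob" using bij unfolding bij_betw_def by simp
  then show ?thesis by blast
qed

lemma mem_iff: assumes "i < k" shows "x \<in> Orb i \<longleftrightarrow> Orb i = Ob x"
proof
  assume x: "x \<in> Orb i"
  obtain y where y: "Orb i = Ob y" using Orb_range[OF assms] by blast
  show "Orb i = Ob x" using part_eq[OF pt, of x y] x y by simp
next
  assume "Orb i = Ob x" then show "x \<in> Orb i" using part_refl[OF pt, of x] by simp
qed

lemma uniq: assumes "i < k" "j < k" "x \<in> Orb i" "x \<in> Orb j" shows "i = j"
proof -
  have "Orb i = Orb j" using assms mem_iff by simp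
  then show ?thesis using bij assms(1,2) unfolding bij_betw_def inj_on_def by blast
qed

lemma rep: assumes "i < k" shows "\<exists>x. x \<in> Orb i"
  using Orb_range[OF assms] part_refl[OF pt] by blast

lemma psO: assumes "i < k" shows "0 < pi_set \<pi> (Orb i)"
  using rep[OF assms] ps_pos[of \<pi>] pos by blast

lemma F_eval:
  assumes i: "i < k" and x: "x \<in> Orb i"
  shows "Fv \<pi> Orb k a x = vec_index a i / sqrt (pi_set \<pi> (Orb i))"
proof -
  have "Fv \<pi> Orb k a x = (\<Sum>j<k. if j = i then vec_index a j / sqrt (pi_set \<pi> (Orb j)) else 0)"
    unfolding Fv_def
  proof (rule sum.cong[OF refl])
    fix j assume j: "j \<in> {..<k}"
    show "vec_index a j * (if x \<in> Orb j then 1 / sqrt (pi_set \<pi> (Orb j)) else 0) =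
          (if j = i then vec_index a j / sqrt (pi_set \<pi> (Orb j)) else 0)"
      proof (cases "j = i")
      case True then show ?thesis using x by simp
    next
      case False
      then have "x \<notin> Orb j" using uniq[of i j x] i j x by blast
      then show ?thesis using False by simp
    qed
  qed
  also have "\<dots> = vec_index a i / sqrt (pi_set \<pi> (Orb i))" using i by (simp add: sum.delta)
  finally show ?thesis .
qed

lemma F_fix: "Pop \<pi> Ob (Fv \<pi> Orb k a) = Fv \<pi> Orb k a"
proof -
  have "Fv \<pi> Orb k a y = Fv \<pi> Orb k a x" if "y \<in> Ob x" for x y
  proof -
    have e: "Ob y = Ob x" by (rule part_eq[OF pt that])
    have yx: "(y \<in> Orb i) = (x \<in> Orb i)" if "i \<in> {..<k}" for i using mem_iff e that by simp
    show ?thesis unfolding Fv_def by (rule sum.cong[OF refl]) (simp only: yx)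
  qed
  then show ?thesis using Pop_fix_iff[of \<pi>, OF pos pt] by blast
qed

lemma F_inj:
  assumes "dim_vec a = k" "dim_vec b = k" "Fv \<pi> Orb k a = Fv \<pi> Orb k b"
  shows "a = b"
proof (rule eq_vecI)
  fix i assume "i < dim_vec b"
  then have i: "i < k" using assms by simp
  obtain x where x: "x \<in> Orb i" using rep[OF i] by blast
  have "vec_index a i / sqrt (pi_set \<pi> (Orb i)) = Fv \<pi> Orb k a x" by (rule F_eval[OF i x, symmetric])
  also have "\<dots> = Fv \<pi> Orb k b x" using assms(3) by simp
  also have "\<dots> = vec_index b i / sqrt (pi_set \<pi> (Orb i))" by (rule F_eval[OF i x])
  finally have "vec_index a i / sqrt (pi_set \<pi> (Orb i)) = vec_index b i / sqrt (pi_set \<pi> (Orb i))" .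
  moreover have "sqrt (pi_set \<pi> (Orb i)) \<noteq> 0" using psO[OF i] by simp
  ultimately show "vec_index a i = vec_index b i" by (simp only: divide_cancel_right) simp
qed (use assms in simp)

lemma F_zero: "Fv \<pi> Orb k (0\<^sub>v k) = (\<lambda>x. 0)"
  unfolding Fv_def by (rule ext, rule sum.neutral) simp

lemma F_smult: assumes "dim_vec a = k" shows "Fv \<pi> Orb k (e \<cdot>\<^sub>v a) = (\<lambda>x. e * Fv \<pi> Orb k a x)"
  unfolding Fv_def sum_distrib_left
proof (rule ext, rule sum.cong[OF refl])
  fix x i assume "i \<in> {..<k}"
  then show "vec_index (e \<cdot>\<^sub>v a) i * (if x \<in> Orb i then 1 / sqrt (pi_set \<pi> (Orb i)) else 0) =
    e * (vec_index a i * (if x \<in> Orb i then 1 / sqrt (pi_set \<pi> (Orb i)) else 0))"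
    using assms by simp
qed

lemma F_surj:
  assumes f: "Pop \<pi> Ob f = f"
  shows "\<exists>a\<in>carrier_vec k. f = Fv \<pi> Orb k a"
proof -
  define r where "r i = (SOME x. x \<in> Orb i)" for i
  have r: "r i \<in> Orb i" if "i < k" for i unfolding r_def by (rule someI_ex[OF rep[OF that]])
  define a where "a = Matrix.vec k (\<lambda>i. f (r i) * sqrt (pi_set \<pi> (Orb i)))"
  have const: "\<And>x y. y \<in> Ob x \<Longrightarrow> f y = f x" using f Pop_fix_iff[of \<pi>, OF pos pt] by blast
  have "f x = Fv \<pi> Orb k a x" for x
  proof -
    obtain i where i: "i < k" "Orb i = Ob x" using idx by blast
    have x: "x \<in> Orb i" using i part_refl[OF pt, of x] by simp
    have "Fv \<pi> Orb k a x = f (r i) * sqrt (pi_set \<pi> (Orb i)) / sqrt (pi_set \<pi> (Orb i))"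
      using F_eval[OF i(1) x] i unfolding a_def by simp
    also have "\<dots> = f (r i)" using psO[OF i(1)] by simp
    also have "\<dots> = f x" using const[of "r i" x] r[OF i(1)] i(2) by simp
    finally show ?thesis by simp
  qed
  then have "f = Fv \<pi> Orb k a" by (rule ext)
  moreover have "a \<in> carrier_vec k" unfolding a_def by simp
  ultimately show ?thesis by blast
qed

end


hide_const (open) Finite_Cartesian_Product.mat



definition Tm :: "('a::finite \<Rightarrow> real) \<Rightarrow> (nat \<Rightarrow> 'a set) \<Rightarrow> nat \<Rightarrow> (nat \<Rightarrow> 'a set) \<Rightarrow> nat \<Rightarrow> real mat" where
  "Tm \<pi> OrbA kA OrbB kB = mat kB kA (\<lambda>(j, i). pi_set \<pi> (OrbA i \<inter> OrbB j) / sqrt (pi_set \<pi> (OrbA i) * pi_set \<pi> (OrbB j)))"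

lemma Tm_carrier: "Tm \<pi> OrbA kA OrbB kB \<in> carrier_mat kB kA"
  unfolding Tm_def by simp

lemma Tm_swap: "transpose_mat (Tm \<pi> OrbA kA OrbB kB) = Tm \<pi> OrbB kB OrbA kA"
  unfolding Tm_def by (rule eq_matI) (auto simp: Int_commute mult.commute)

lemma B4:
  assumes A: "penum \<pi> OA OrbA kA" and B: "penum \<pi> OB OrbB kB" and a: "dim_vec a = kA"
  shows "Pop \<pi> OB (Fv \<pi> OrbA kA a) = Fv \<pi> OrbB kB (Tm \<pi> OrbA kA OrbB kB *\<^sub>v a)"
proof
  fix x
  obtain j where j: "j < kB" "OrbB j = OB x" using penum.idx[OF B] by blast
  have xj: "x \<in> OrbB j" using j part_refl[OF penum.pt[OF B], of x] by simp
  define C where "C = OrbB j"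
  have posC: "0 < pi_set \<pi> C" unfolding C_def by (rule penum.psO[OF B j(1)])
  have posO: "0 < pi_set \<pi> (OrbA i)" if "i < kA" for i by (rule penum.psO[OF A that])
  have inner: "(\<Sum>y\<in>C. \<pi> y * (if y \<in> OrbA i then 1 / sqrt (pi_set \<pi> (OrbA i)) else 0))
      = pi_set \<pi> (OrbA i \<inter> C) / sqrt (pi_set \<pi> (OrbA i))" for i
  proof -
    have "(\<Sum>y\<in>C. \<pi> y * (if y \<in> OrbA i then 1 / sqrt (pi_set \<pi> (OrbA i)) else 0))
        = (\<Sum>y\<in>C. (if y \<in> OrbA i then \<pi> y else 0)) / sqrt (pi_set \<pi> (OrbA i))"
      unfolding sum_divide_distrib by (rule sum.cong) auto
    also have "(\<Sum>y\<in>C. (if y \<in> OrbA i then \<pi> y else 0)) = pi_set \<pi> (OrbA i \<inter> C)"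
      unfolding pi_set_def by (simp add: sum.inter_restrict Int_commute)
    finally show ?thesis .
  qed
  have "(\<Sum>y\<in>C. \<pi> y * Fv \<pi> OrbA kA a y) =
        (\<Sum>y\<in>C. \<Sum>i<kA. vec_index a i * (\<pi> y * (if y \<in> OrbA i then 1 / sqrt (pi_set \<pi> (OrbA i)) else 0)))"
    unfolding Fv_def sum_distrib_left by (simp add: algebra_simps)
  also have "\<dots> = (\<Sum>i<kA. vec_index a i * (\<Sum>y\<in>C. \<pi> y * (if y \<in> OrbA i then 1 / sqrt (pi_set \<pi> (OrbA i)) else 0)))"
    by (subst sum.swap) (simp add: sum_distrib_left)
  also have "\<dots> = (\<Sum>i<kA. vec_index a i * (pi_set \<pi> (OrbA i \<inter> C) / sqrt (pi_set \<pi> (OrbA i))))"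
    unfolding inner ..
  finally have L1: "(\<Sum>y\<in>C. \<pi> y * Fv \<pi> OrbA kA a y) =
      (\<Sum>i<kA. vec_index a i * (pi_set \<pi> (OrbA i \<inter> C) / sqrt (pi_set \<pi> (OrbA i))))" .
  have L: "Pop \<pi> OB (Fv \<pi> OrbA kA a) x =
      (\<Sum>i<kA. vec_index a i * (pi_set \<pi> (OrbA i \<inter> C) / sqrt (pi_set \<pi> (OrbA i)))) / pi_set \<pi> C"
    unfolding Pop_def using L1 j(2) C_def by simp
  have Tj: "vec_index (Tm \<pi> OrbA kA OrbB kB *\<^sub>v a) j =
      (\<Sum>i<kA. pi_set \<pi> (OrbA i \<inter> C) / sqrt (pi_set \<pi> (OrbA i) * pi_set \<pi> C) * vec_index a i)"
    using j(1) a unfolding Tm_def C_def by (auto simp: Matrix.scalar_prod_def lessThan_atLeast0 intro!: sum.cong)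
  have R: "Fv \<pi> OrbB kB (Tm \<pi> OrbA kA OrbB kB *\<^sub>v a) x =
      (\<Sum>i<kA. pi_set \<pi> (OrbA i \<inter> C) / sqrt (pi_set \<pi> (OrbA i) * pi_set \<pi> C) * vec_index a i) / sqrt (pi_set \<pi> C)"
    using penum.F_eval[OF B j(1) xj] Tj C_def by simp
  have termeq: "vec_index a i * (pi_set \<pi> (OrbA i \<inter> C) / sqrt (pi_set \<pi> (OrbA i))) / pi_set \<pi> C =
      pi_set \<pi> (OrbA i \<inter> C) / sqrt (pi_set \<pi> (OrbA i) * pi_set \<pi> C) * vec_index a i / sqrt (pi_set \<pi> C)"
    if "i < kA" for i
  proof -
    have sC: "sqrt (pi_set \<pi> C) * sqrt (pi_set \<pi> C) = pi_set \<pi> C" using posC by simp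
    have p1: "0 < sqrt (pi_set \<pi> C)" using posC by simp
    have p2: "0 < sqrt (pi_set \<pi> (OrbA i))" using posO[OF that] by simp
    show ?thesis unfolding real_sqrt_mult using p1 p2 sC[symmetric]
      by (simp add: field_simps)
  qed
  show "Pop \<pi> OB (Fv \<pi> OrbA kA a) x = Fv \<pi> OrbB kB (Tm \<pi> OrbA kA OrbB kB *\<^sub>v a) x"
    unfolding L R sum_divide_distrib by (rule sum.cong[OF refl], rule termeq) simp
qed


lemma B6:
  assumes A: "penum \<pi> OA OrbA kA" and B: "penum \<pi> OB OrbB kB"
  shows "eigenvalue (transpose_mat (Tm \<pi> OrbA kA OrbB kB) * Tm \<pi> OrbA kA OrbB kB) e \<longleftrightarrow>
    (\<exists>f. Pop \<pi> OA f = f \<and> f \<noteq> (\<lambda>x. 0) \<and> Pop \<pi> OA (Pop \<pi> OB f) = (\<lambda>x. e * f x))"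
proof -
  define M where "M = Tm \<pi> OrbA kA OrbB kB"
  have Mc: "M \<in> carrier_mat kB kA" unfolding M_def by (rule Tm_carrier)
  have Mt: "transpose_mat M = Tm \<pi> OrbB kB OrbA kA" unfolding M_def by (rule Tm_swap)
  have Mtc: "transpose_mat M \<in> carrier_mat kA kB" using Mc by simp
  have comp: "Pop \<pi> OA (Pop \<pi> OB (Fv \<pi> OrbA kA v)) = Fv \<pi> OrbA kA ((transpose_mat M * M) *\<^sub>v v)"
    if v: "v \<in> carrier_vec kA" for v
  proof -
    have "Pop \<pi> OB (Fv \<pi> OrbA kA v) = Fv \<pi> OrbB kB (M *\<^sub>v v)"
      unfolding M_def by (rule B4[OF A B]) (use v in simp)
    moreover have "Pop \<pi> OA (Fv \<pi> OrbB kB (M *\<^sub>v v)) = Fv \<pi> OrbA kA (transpose_mat M *\<^sub>v (M *\<^sub>v v))"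
      unfolding Mt by (rule B4[OF B A]) (use Mc in simp)
    moreover have "(transpose_mat M * M) *\<^sub>v v = transpose_mat M *\<^sub>v (M *\<^sub>v v)"
      using Mc Mtc v by simp
    ultimately show ?thesis by simp
  qed
  have dimMM: "dim_row (transpose_mat M * M) = kA" using Mc by simp
  show ?thesis unfolding M_def[symmetric]
  proof
    assume "eigenvalue (transpose_mat M * M) e"
    then obtain v where v: "v \<in> carrier_vec kA" "v \<noteq> 0\<^sub>v kA" "(transpose_mat M * M) *\<^sub>v v = e \<cdot>\<^sub>v v"
      unfolding eigenvalue_def eigenvector_def dimMM by blast
    define f where "f = Fv \<pi> OrbA kA v"
    have "Pop \<pi> OA f = f" unfolding f_def by (rule penum.F_fix[OF A])
    moreover have "f \<noteq> (\<lambda>x. 0)"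
    proof
      assume "f = (\<lambda>x. 0)"
      then have eq0: "Fv \<pi> OrbA kA v = Fv \<pi> OrbA kA (0\<^sub>v kA)" unfolding f_def penum.F_zero[OF A] .
      have "v = 0\<^sub>v kA" by (rule penum.F_inj[OF A _ _ eq0]) (use v in simp_all)
      then show False using v(2) by simp
    qed
    moreover have "Pop \<pi> OA (Pop \<pi> OB f) = (\<lambda>x. e * f x)"
      unfolding f_def comp[OF v(1)] v(3) by (rule penum.F_smult[OF A]) (use v in simp)
    ultimately show "\<exists>f. Pop \<pi> OA f = f \<and> f \<noteq> (\<lambda>x. 0) \<and> Pop \<pi> OA (Pop \<pi> OB f) = (\<lambda>x. e * f x)"
      by blast
  next
    assume "\<exists>f. Pop \<pi> OA f = f \<and> f \<noteq> (\<lambda>x. 0) \<and> Pop \<pi> OA (Pop \<pi> OB f) = (\<lambda>x. e * f x)"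
    then obtain f where f: "Pop \<pi> OA f = f" "f \<noteq> (\<lambda>x. 0)" "Pop \<pi> OA (Pop \<pi> OB f) = (\<lambda>x. e * f x)"
      by blast
    obtain a where a: "a \<in> carrier_vec kA" "f = Fv \<pi> OrbA kA a" using penum.F_surj[OF A f(1)] by blast
    have anz: "a \<noteq> 0\<^sub>v kA" using f(2) a(2) penum.F_zero[OF A] by auto
    have "Fv \<pi> OrbA kA ((transpose_mat M * M) *\<^sub>v a) = Fv \<pi> OrbA kA (e \<cdot>\<^sub>v a)"
      using comp[OF a(1)] f(3) a(2) penum.F_smult[OF A, of a e] a(1) by simp
    then have "(transpose_mat M * M) *\<^sub>v a = e \<cdot>\<^sub>v a"
      by (rule penum.F_inj[OF A, rotated 2]) (use a(1) dimMM in simp_all)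
    then have "eigenvector (transpose_mat M * M) a e"
      unfolding eigenvector_def dimMM using a(1) anz by simp
    then show "eigenvalue (transpose_mat M * M) e" unfolding eigenvalue_def by blast
  qed
qed

lemma eig_finite:
  assumes "(A :: real mat) \<in> carrier_mat n n"
  shows "finite {e. eigenvalue A e}"
proof -
  have "coeff (char_poly A) n = 1" using degree_monic_char_poly[OF assms] by simp
  then have "char_poly A \<noteq> 0" by auto
  then have "finite {e. poly (char_poly A) e = 0}" by (rule poly_roots_finite)
  then show ?thesis using eigenvalue_root_char_poly[OF assms] by simp
qed


lemma ip_ext:
  fixes \<pi> :: "'a::finite \<Rightarrow> real"
  assumes pos: "\<And>x. \<pi> x > 0" and h: "\<And>g. inner_pi \<pi> x g = inner_pi \<pi> y g"
  shows "x = y"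
proof -
  have "inner_pi \<pi> (x - y) (x - y) = 0" using h[of "x - y"] by (simp add: ip_diff_left)
  then have "x - y = (\<lambda>z. 0)" by (rule ip_eq0[of \<pi>, OF pos])
  show ?thesis
  proof
    fix z show "x z = y z" using fun_cong[OF \<open>x - y = (\<lambda>z. 0)\<close>, of z] by simp
  qed
qed

context twop begin

lemma range_fix1: "range P1 = {f. P1 f = f}"
proof (rule equalityI; rule subsetI)
  fix x assume "x \<in> range P1"
  then obtain g where "x = P1 g" by blast
  then show "x \<in> {f. P1 f = f}" using idem1 by simp
next
  fix x assume "x \<in> {f. P1 f = f}"
  then have "x = P1 x" by simp
  then show "x \<in> range P1" using rangeI[of P1 x] by simp
qed

lemma proj_sub:
  assumes sub: "\<forall>f. P1 f = f \<longrightarrow> P2 f = f"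
  shows "\<forall>f. P1 (P2 f) = orth_proj \<pi> ({f. P1 f = f} \<inter> {f. P2 f = f}) f"
    and "\<forall>f. P2 (P1 f) = orth_proj \<pi> ({f. P1 f = f} \<inter> {f. P2 f = f}) f"
proof -
  have Weq: "{f. P1 f = f} \<inter> {f. P2 f = f} = {f. P1 f = f}" using sub by blast
  have op: "orth_proj \<pi> ({f. P1 f = f} \<inter> {f. P2 f = f}) f = P1 f" for f
    unfolding Weq orth_proj_def
  proof (rule the_equality)
    show "P1 f \<in> {f. P1 f = f} \<and> f - P1 f \<in> orth_pi \<pi> {f. P1 f = f}"
      unfolding orth_pi_def using idem1 sa1 by (auto simp: ip_diff_left)
    fix g assume g: "g \<in> {f. P1 f = f} \<and> f - g \<in> orth_pi \<pi> {f. P1 f = f}"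
    define d where "d = g - P1 f"
    have Pd: "P1 d = d" unfolding d_def using g idem1 by (simp add: Pop_diff)
    have o1: "ip (f - g) d = 0" using g Pd unfolding orth_pi_def by blast
    have o2: "ip (f - P1 f) d = 0"
      using Pd sa1[of f d] by (simp add: ip_diff_left)
    have "ip d d = ip (f - P1 f) d - ip (f - g) d"
      unfolding d_def by (simp add: ip_diff_left)
    then have "ip d d = 0" using o1 o2 by simp
    then have "d = (\<lambda>x. 0)" by (rule ip0)
    then have d0: "g - P1 f = (\<lambda>x. 0)" unfolding d_def .
    show "g = P1 f"
    proof
      fix z show "g z = P1 f z" using fun_cong[OF d0, of z] by simp
    qed
  qed
  show "\<forall>f. P2 (P1 f) = orth_proj \<pi> ({f. P1 f = f} \<inter> {f. P2 f = f}) f"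
    using op sub idem1 by simp
  show "\<forall>f. P1 (P2 f) = orth_proj \<pi> ({f. P1 f = f} \<inter> {f. P2 f = f}) f"
  proof
    fix f
    have "P1 (P2 f) = P1 f"
    proof (rule ip_ext[of \<pi>, OF pos])
      fix g
      have "ip (P1 (P2 f)) g = ip (P2 f) (P1 g)" by (rule sa1)
      also have "\<dots> = ip f (P2 (P1 g))" by (rule sa2)
      also have "\<dots> = ip f (P1 g)" using sub idem1 by simp
      also have "\<dots> = ip (P1 f) g" by (rule sa1[symmetric])
      finally show "ip (P1 (P2 f)) g = ip (P1 f) g" .
    qed
    then show "P1 (P2 f) = orth_proj \<pi> ({f. P1 f = f} \<inter> {f. P2 f = f}) f" using op by simp
  qed
qed

end

lemma swap_set:
  "{inner_pi \<pi> f h | f h. f \<in> A \<and> h \<in> B \<and> norm_pi \<pi> f \<le> 1 \<and> norm_pi \<pi> h \<le> 1} =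
   {inner_pi \<pi> f h | f h. f \<in> B \<and> h \<in> A \<and> norm_pi \<pi> f \<le> 1 \<and> norm_pi \<pi> h \<le> 1}"
  (is "?L = ?R")
proof (rule equalityI; rule subsetI)
  fix x assume "x \<in> ?L"
  then obtain f h where fh: "x = inner_pi \<pi> f h" "f \<in> A" "h \<in> B" "norm_pi \<pi> f \<le> 1" "norm_pi \<pi> h \<le> 1"
    by blast
  have "x = inner_pi \<pi> h f" using fh(1) ip_sym by metis
  then show "x \<in> ?R" using fh(2-5) by blast
next
  fix x assume "x \<in> ?R"
  then obtain f h where fh: "x = inner_pi \<pi> f h" "f \<in> B" "h \<in> A" "norm_pi \<pi> f \<le> 1" "norm_pi \<pi> h \<le> 1"
    by blast
  have "x = inner_pi \<pi> h f" using fh(1) ip_sym by metis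
  then show "x \<in> ?L" using fh(2-5) by blast
qed

lemma cosine_sym: "cosine \<pi> S1 S2 = cosine \<pi> S2 S1"
proof -
  have i: "S2 \<inter> S1 = S1 \<inter> S2" by blast
  show ?thesis unfolding cosine_def i
    using swap_set[of \<pi> "S1 \<inter> orth_pi \<pi> (S1 \<inter> S2)" "S2 \<inter> orth_pi \<pi> (S1 \<inter> S2)"] by simp
qed


theorem proposition8p6:
  fixes \<pi> :: "'a::finite \<Rightarrow> real"
    and G1 :: "('g, 'm) monoid_scheme" and \<phi>1 :: "'g \<Rightarrow> 'a \<Rightarrow> 'a"
    and G2 :: "('h, 'n) monoid_scheme" and \<phi>2 :: "'h \<Rightarrow> 'a \<Rightarrow> 'a"
    and Orb :: "nat \<Rightarrow> 'a set" and Cl :: "nat \<Rightarrow> 'a set" and k1 k2 :: nat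
    and T :: "real mat"
  assumes pos: "\<And>x. \<pi> x > 0"
    and prob: "(\<Sum>x\<in>UNIV. \<pi> x) = 1"
    and act1: "group_action G1 UNIV \<phi>1"
    and act2: "group_action G2 UNIV \<phi>2"
    and O_enum: "bij_betw Orb {..<k1} (orbits G1 UNIV \<phi>1)"
    and C_enum: "bij_betw Cl {..<k2} (orbits G2 UNIV \<phi>2)"
    and T_def: "T = mat k2 k1 (\<lambda>(j, i). pi_set \<pi> (Orb i \<inter> Cl j) / sqrt (pi_set \<pi> (Orb i) * pi_set \<pi> (Cl j)))"
  shows "cosine \<pi> (gibbs_space \<pi> G1 \<phi>1) (gibbs_space \<pi> G2 \<phi>2) =
           (if {\<sigma> \<in> singular_values T. \<sigma> < 1} = {} then 0
            else Max {\<sigma> \<in> singular_values T. \<sigma> < 1}) \<and>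
         ((\<forall>\<sigma> \<in> singular_values T. \<sigma> = 1) \<longrightarrow>
           cosine \<pi> (gibbs_space \<pi> G1 \<phi>1) (gibbs_space \<pi> G2 \<phi>2) = 0 \<and>
           (\<forall>f. gibbs_op \<pi> G1 \<phi>1 (gibbs_op \<pi> G2 \<phi>2 f) =
                orth_proj \<pi> (gibbs_space \<pi> G1 \<phi>1 \<inter> gibbs_space \<pi> G2 \<phi>2) f) \<and>
           (\<forall>f. gibbs_op \<pi> G2 \<phi>2 (gibbs_op \<pi> G1 \<phi>1 f) =
                orth_proj \<pi> (gibbs_space \<pi> G1 \<phi>1 \<inter> gibbs_space \<pi> G2 \<phi>2) f))"
proof -
  define O1 where "O1 = orbit G1 \<phi>1"
  define O2 where "O2 = orbit G2 \<phi>2"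
  have pt1: "part O1" unfolding O1_def by (rule orbit_part[OF act1])
  have pt2: "part O2" unfolding O2_def by (rule orbit_part[OF act2])
  have r1: "range O1 = orbits G1 UNIV \<phi>1" unfolding orbits_def O1_def by auto
  have r2: "range O2 = orbits G2 UNIV \<phi>2" unfolding orbits_def O2_def by auto
  have pe1: "penum \<pi> O1 Orb k1" unfolding penum_def using pos pt1 O_enum r1 by simp
  have pe2: "penum \<pi> O2 Cl k2" unfolding penum_def using pos pt2 C_enum r2 by simp
  have tw12: "twop \<pi> O1 O2" unfolding twop_def using pos pt1 pt2 by simp
  have tw21: "twop \<pi> O2 O1" unfolding twop_def using pos pt1 pt2 by simp
  have S1: "gibbs_space \<pi> G1 \<phi>1 = {f. Pop \<pi> O1 f = f}"
    unfolding gibbs_space_def gibbs_op_eq O1_def[symmetric] by (rule twop.range_fix1[OF tw12])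
  have S2: "gibbs_space \<pi> G2 \<phi>2 = {f. Pop \<pi> O2 f = f}"
    unfolding gibbs_space_def gibbs_op_eq O2_def[symmetric] by (rule twop.range_fix1[OF tw21])
  have g1: "gibbs_op \<pi> G1 \<phi>1 = Pop \<pi> O1" unfolding gibbs_op_eq O1_def ..
  have g2: "gibbs_op \<pi> G2 \<phi>2 = Pop \<pi> O2" unfolding gibbs_op_eq O2_def ..
  have Tt: "T = Tm \<pi> Orb k1 Cl k2" unfolding T_def Tm_def ..
  have Tc: "T \<in> carrier_mat k2 k1" unfolding Tt by (rule Tm_carrier)
  have TT: "transpose_mat T = Tm \<pi> Cl k2 Orb k1" unfolding Tt by (rule Tm_swap)
  define SV where "SV = {\<sigma> \<in> singular_values T. \<sigma> < 1}"
  have C: "cosine \<pi> {f. Pop \<pi> O1 f = f} {f. Pop \<pi> O2 f = f} = (if SV = {} then 0 else Max SV) \<and>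
     (SV = {} \<longrightarrow> (\<forall>f. Pop \<pi> O1 f = f \<longrightarrow> Pop \<pi> O2 f = f) \<or> (\<forall>f. Pop \<pi> O2 f = f \<longrightarrow> Pop \<pi> O1 f = f))"
  proof (cases "k1 \<le> k2")
    case True
    define E where "E = {e. eigenvalue (transpose_mat T * T) e}"
    have sv: "singular_values T = {sqrt e |e. e \<in> E}"
      unfolding singular_values_def E_def Let_def using Tc True by simp
    have EE: "E = {e. \<exists>f. Pop \<pi> O1 f = f \<and> f \<noteq> (\<lambda>x. 0) \<and> Pop \<pi> O1 (Pop \<pi> O2 f) = (\<lambda>x. e * f x)}"
      unfolding E_def Tt by (rule Collect_cong, rule B6[OF pe1 pe2])
    have fin: "finite E" unfolding E_def by (rule eig_finite[of _ k1]) (use Tc in simp)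
    have SVe: "SV = {\<sigma> \<in> {sqrt e |e. e \<in> E}. \<sigma> < 1}" unfolding SV_def sv ..
    show ?thesis unfolding SVe
      using twop.loc_part1[OF tw12 EE fin] twop.loc_part2[OF tw12 EE] by simp
  next
    case False
    define E where "E = {e. eigenvalue (T * transpose_mat T) e}"
    have sv: "singular_values T = {sqrt e |e. e \<in> E}"
      unfolding singular_values_def E_def Let_def using Tc False by simp
    have TT2: "T * transpose_mat T = transpose_mat (Tm \<pi> Cl k2 Orb k1) * Tm \<pi> Cl k2 Orb k1"
      unfolding TT[symmetric] by simp
    have EE: "E = {e. \<exists>f. Pop \<pi> O2 f = f \<and> f \<noteq> (\<lambda>x. 0) \<and> Pop \<pi> O2 (Pop \<pi> O1 f) = (\<lambda>x. e * f x)}"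
      unfolding E_def TT2 by (rule Collect_cong, rule B6[OF pe2 pe1])
    have fin: "finite E" unfolding E_def by (rule eig_finite[of _ k2]) (use Tc in simp)
    have SVe: "SV = {\<sigma> \<in> {sqrt e |e. e \<in> E}. \<sigma> < 1}" unfolding SV_def sv ..
    have cs: "cosine \<pi> {f. Pop \<pi> O1 f = f} {f. Pop \<pi> O2 f = f} = cosine \<pi> {f. Pop \<pi> O2 f = f} {f. Pop \<pi> O1 f = f}"
      by (rule cosine_sym)
    show ?thesis unfolding SVe cs
      using twop.loc_part1[OF tw21 EE fin] twop.loc_part2[OF tw21 EE] by simp
  qed
  have W: "gibbs_space \<pi> G1 \<phi>1 \<inter> gibbs_space \<pi> G2 \<phi>2 = {f. Pop \<pi> O1 f = f} \<inter> {f. Pop \<pi> O2 f = f}"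
    unfolding S1 S2 ..
  have W': "{f. Pop \<pi> O2 f = f} \<inter> {f. Pop \<pi> O1 f = f} = {f. Pop \<pi> O1 f = f} \<inter> {f. Pop \<pi> O2 f = f}"
    by blast
  show ?thesis
  proof (intro conjI impI)
    show "cosine \<pi> (gibbs_space \<pi> G1 \<phi>1) (gibbs_space \<pi> G2 \<phi>2) =
      (if {\<sigma> \<in> singular_values T. \<sigma> < 1} = {} then 0 else Max {\<sigma> \<in> singular_values T. \<sigma> < 1})"
      using C unfolding S1 S2 SV_def by simp
    assume all1: "\<forall>\<sigma>\<in>singular_values T. \<sigma> = 1"
    then have emp: "SV = {}" unfolding SV_def by auto
    show "cosine \<pi> (gibbs_space \<pi> G1 \<phi>1) (gibbs_space \<pi> G2 \<phi>2) = 0"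
      using C emp unfolding S1 S2 by simp
    have cases: "(\<forall>f. Pop \<pi> O1 f = f \<longrightarrow> Pop \<pi> O2 f = f) \<or> (\<forall>f. Pop \<pi> O2 f = f \<longrightarrow> Pop \<pi> O1 f = f)"
      using C emp by simp
    have both: "(\<forall>f. Pop \<pi> O1 (Pop \<pi> O2 f) = orth_proj \<pi> ({f. Pop \<pi> O1 f = f} \<inter> {f. Pop \<pi> O2 f = f}) f) \<and>
                (\<forall>f. Pop \<pi> O2 (Pop \<pi> O1 f) = orth_proj \<pi> ({f. Pop \<pi> O1 f = f} \<inter> {f. Pop \<pi> O2 f = f}) f)"
      using cases
    proof
      assume sub: "\<forall>f. Pop \<pi> O1 f = f \<longrightarrow> Pop \<pi> O2 f = f"
      show ?thesis using twop.proj_sub[OF tw12 sub] by blast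
    next
      assume sub: "\<forall>f. Pop \<pi> O2 f = f \<longrightarrow> Pop \<pi> O1 f = f"
      show ?thesis using twop.proj_sub[OF tw21 sub] unfolding W' by blast
    qed
    show "\<forall>f. gibbs_op \<pi> G1 \<phi>1 (gibbs_op \<pi> G2 \<phi>2 f) =
         orth_proj \<pi> (gibbs_space \<pi> G1 \<phi>1 \<inter> gibbs_space \<pi> G2 \<phi>2) f"
      unfolding g1 g2 W using both by blast
    show "\<forall>f. gibbs_op \<pi> G2 \<phi>2 (gibbs_op \<pi> G1 \<phi>1 f) =
         orth_proj \<pi> (gibbs_space \<pi> G1 \<phi>1 \<inter> gibbs_space \<pi> G2 \<phi>2) f"
      unfolding g1 g2 W using both by blast
  qed
qed


end
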